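(* Let $C$ be a consistent conjunctive transition formula of dimension $n$. Then $\hat\alpha(C)$ is a $\mathbb{Q}$-VASR abstraction of $C$ (i.e., if $\hat\alpha(C)=(S,V)$ then $C\Vdash_S V$). If moreover $C$ is expressed in $\exists$LRA, then $\hat\alpha(C)$ is a best $\mathbb{Q}$-VASR abstraction of $C$.
   Context: $\exists$LIRA formulas are built from atoms $s<t$, $s=t$ over linear terms with rational coefficients using $\land,\lor,\exists x\in\mathbb{Q},\exists x\in\mathbb{Z}$; $\exists$LRA omits quantification over $\mathbb{Z}$. A transition formula of dimension $n$ is a formula $F(\vec x,\vec x')$ with free variables $x_1,\dots,x_n,x_1',\dots,x_n'$, defining the transition system on $\mathbb{Q}^n$ with $\vec u\to_F\vec v$ iff $F(\vec u,\vec v)$ holds. A conjunctive transition formula is one that is a conjunction of atoms (possibly with additional existentially quantified variables); consistent means satisfiable. A $\mathbb{Q}$-VASR of dimension $d$ is a finite set $V\subseteq\{0,1\}^d\times\mathbb{Q}^d$; $\vec u\to_V\vec v$ iff $\vec v=\vec r*\vec u+\vec a$ for some $(\vec r,\vec a)\in V$ ($*$ pointwise product). A linear simulation $A\Vdash_S B$ between transition systems on $\mathbb{Q}^n$ and $\mathbb{Q}^m$ is $S\in\mathbb{Q}^{m\times n}$ with $\vec u\to_A\vec v\Rightarrow S\vec u\to_B S\vec v$. A $\mathbb{Q}$-VASR abstraction is a pair $(S,V)$ with $S\in\mathbb{Q}^{d\times n}$ and $V$ a $d$-dimensional $\mathbb{Q}$-VASR; it is an abstraction of $F$ if $F\Vdash_SV$.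 $(S^1,V^1)\preceq(S^2,V^2)$ iff there is a matrix $T$ with $V^1\Vdash_TV^2$ and $TS^1=S^2$. A best $\mathbb{Q}$-VASR abstraction of $F$ is an abstraction of $F$ that is $\preceq$ every $\mathbb{Q}$-VASR abstraction of $F$. $\hat\alpha(C)$: let $\mathit{Res}_C=\{(\vec s,a)\in\mathbb{Q}^n\times\mathbb{Q}: C\models\vec s\cdot\vec x'=a\}$ and $\mathit{Inc}_C=\{(\vec s,a): C\models\vec s\cdot\vec x'=\vec s\cdot\vec x+a\}$ (both vector spaces). With chosen bases $(\vec s_1,a_1),\dots,(\vec s_m,a_m)$ of $\mathit{Res}_C$ and $(\vec s_{m+1},a_{m+1}),\dots,(\vec s_d,a_d)$ of $\mathit{Inc}_C$, $\hat\alpha(C)=(S,\{(\vec r,\vec a)\})$ where $S\in\mathbb{Q}^{d\times n}$ has rows $\vec s_1,\dots,\vec s_d$, $\vec r$ consists of $m$ zeros followed by $d-m$ ones, and $\vec a=(a_1,\dots,a_d)$. *)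

theory Defs
  imports "Jordan_Normal_Form.Matrix"
begin

text \<open>A linear atom over a variable vector w: either  c . w < k  or  c . w = k.
  (Every atom s < t / s = t between linear terms with rational coefficients
  is of this form after moving everything to one side.)\<close>
datatype latom = Lt "rat vec" rat | Eq "rat vec" rat

fun atom_holds :: "latom \<Rightarrow> rat vec \<Rightarrow> bool" where
  "atom_holds (Lt c k) w = (c \<bullet> w < k)"
| "atom_holds (Eq c k) w = (c \<bullet> w = k)"

fun atom_coeffs :: "latom \<Rightarrow> rat vec" where
  "atom_coeffs (Lt c k) = c"
| "atom_coeffs (Eq c k) = c"

text \<open>A conjunctive transition formula of dimension n:
  exists y in Q^p, z in Z^q.  /\ atoms (x @ x' @ y @ z).\<close>
record ctf =
  ctf_dim :: nat
  ctf_p :: nat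
  ctf_q :: nat
  ctf_atoms :: "latom list"

definition ctf_wf :: "ctf \<Rightarrow> bool" where
  "ctf_wf C \<longleftrightarrow> (\<forall>\<phi>\<in>set (ctf_atoms C).
      atom_coeffs \<phi> \<in> carrier_vec (2 * ctf_dim C + ctf_p C + ctf_q C))"

definition ctf_rel :: "ctf \<Rightarrow> rat vec \<Rightarrow> rat vec \<Rightarrow> bool" where
  "ctf_rel C u v \<longleftrightarrow> u \<in> carrier_vec (ctf_dim C) \<and> v \<in> carrier_vec (ctf_dim C) \<and>
     (\<exists>y z. y \<in> carrier_vec (ctf_p C) \<and> z \<in> carrier_vec (ctf_q C) \<and>
        (\<forall>i<ctf_q C. z $ i \<in> \<int>) \<and>
        (\<forall>\<phi>\<in>set (ctf_atoms C). atom_holds \<phi> (u @\<^sub>v v @\<^sub>v y @\<^sub>v z)))"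

definition ctf_consistent :: "ctf \<Rightarrow> bool" where
  "ctf_consistent C \<longleftrightarrow> (\<exists>u v. ctf_rel C u v)"

text \<open>Expressed in existential LRA: no integer-quantified variables.\<close>
definition ctf_is_LRA :: "ctf \<Rightarrow> bool" where
  "ctf_is_LRA C \<longleftrightarrow> ctf_q C = 0"

definition is_qvasr :: "nat \<Rightarrow> (rat vec \<times> rat vec) set \<Rightarrow> bool" where
  "is_qvasr d V \<longleftrightarrow> finite V \<and> (\<forall>(r, a)\<in>V. r \<in> carrier_vec d \<and> a \<in> carrier_vec d \<and>
      (\<forall>i<d. r $ i = 0 \<or> r $ i = 1))"

definition vasr_step :: "nat \<Rightarrow> (rat vec \<times> rat vec) set \<Rightarrow> rat vec \<Rightarrow> rat vec \<Rightarrow> bool" where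
  "vasr_step d V u v \<longleftrightarrow> u \<in> carrier_vec d \<and>
     (\<exists>(r, a)\<in>V. v = vec d (\<lambda>i. r $ i * u $ i) + a)"

definition lin_sim :: "nat \<Rightarrow> nat \<Rightarrow> rat mat \<Rightarrow> (rat vec \<Rightarrow> rat vec \<Rightarrow> bool)
    \<Rightarrow> (rat vec \<Rightarrow> rat vec \<Rightarrow> bool) \<Rightarrow> bool" where
  "lin_sim m n S A B \<longleftrightarrow> S \<in> carrier_mat m n \<and> (\<forall>u v. A u v \<longrightarrow> B (S *\<^sub>v u) (S *\<^sub>v v))"

definition qvasr_abstraction :: "nat \<Rightarrow> (rat vec \<Rightarrow> rat vec \<Rightarrow> bool)
    \<Rightarrow> nat \<Rightarrow> rat mat \<Rightarrow> (rat vec \<times> rat vec) set \<Rightarrow> bool" where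
  "qvasr_abstraction n F d S V \<longleftrightarrow> S \<in> carrier_mat d n \<and> is_qvasr d V \<and> lin_sim d n S F (vasr_step d V)"

definition abs_le :: "nat \<Rightarrow> rat mat \<Rightarrow> (rat vec \<times> rat vec) set
    \<Rightarrow> nat \<Rightarrow> rat mat \<Rightarrow> (rat vec \<times> rat vec) set \<Rightarrow> bool" where
  "abs_le d1 S1 V1 d2 S2 V2 \<longleftrightarrow>
     (\<exists>T. lin_sim d2 d1 T (vasr_step d1 V1) (vasr_step d2 V2) \<and> T * S1 = S2)"

definition best_qvasr_abstraction :: "nat \<Rightarrow> (rat vec \<Rightarrow> rat vec \<Rightarrow> bool)
    \<Rightarrow> nat \<Rightarrow> rat mat \<Rightarrow> (rat vec \<times> rat vec) set \<Rightarrow> bool" where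
  "best_qvasr_abstraction n F d S V \<longleftrightarrow> qvasr_abstraction n F d S V \<and>
     (\<forall>d' S' V'. qvasr_abstraction n F d' S' V' \<longrightarrow> abs_le d S V d' S' V')"

definition Res :: "ctf \<Rightarrow> (rat vec \<times> rat) set" where
  "Res C = {(s, a). s \<in> carrier_vec (ctf_dim C) \<and> (\<forall>u v. ctf_rel C u v \<longrightarrow> s \<bullet> v = a)}"

definition Inc :: "ctf \<Rightarrow> (rat vec \<times> rat) set" where
  "Inc C = {(s, a). s \<in> carrier_vec (ctf_dim C) \<and> (\<forall>u v. ctf_rel C u v \<longrightarrow> s \<bullet> v = s \<bullet> u + a)}"

definition is_basis_of :: "nat \<Rightarrow> (rat vec \<times> rat) set \<Rightarrow> (rat vec \<times> rat) list \<Rightarrow> bool" where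
  "is_basis_of n X bs \<longleftrightarrow> set bs \<subseteq> X \<and>
     (\<forall>c::nat \<Rightarrow> rat.
        (\<forall>j<n. (\<Sum>i<length bs. c i * fst (bs ! i) $ j) = 0) \<and>
        (\<Sum>i<length bs. c i * snd (bs ! i)) = 0 \<longrightarrow> (\<forall>i<length bs. c i = 0)) \<and>
     (\<forall>(s, a)\<in>X. \<exists>c::nat \<Rightarrow> rat.
        (\<forall>j<n. s $ j = (\<Sum>i<length bs. c i * fst (bs ! i) $ j)) \<and>
        a = (\<Sum>i<length bs. c i * snd (bs ! i)))"

text \<open>(d, S, V) is a value of alpha-hat(C) for some choice of bases.\<close>
definition alpha_hat :: "ctf \<Rightarrow> nat \<Rightarrow> rat mat \<Rightarrow> (rat vec \<times> rat vec) set \<Rightarrow> bool" where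
  "alpha_hat C d S V \<longleftrightarrow> (\<exists>bR bI.
     is_basis_of (ctf_dim C) (Res C) bR \<and> is_basis_of (ctf_dim C) (Inc C) bI \<and>
     d = length bR + length bI \<and>
     S = mat_of_rows (ctf_dim C) (map fst (bR @ bI)) \<and>
     V = {(vec d (\<lambda>i. if i < length bR then 0 else 1), vec_of_list (map snd (bR @ bI)))})"

end

theory Submission
  imports Defs
begin


lemma sum_split_nat: "(\<Sum>k<m+l. g k) = (\<Sum>k<m. g k) + (\<Sum>k<l. g (m+k))"
  for g :: "nat \<Rightarrow> 'a::comm_monoid_add"
  by (induct l) (auto simp: add_ac)

lemma convex_union_single:
  fixes K :: "'x set" and L :: "'x \<Rightarrow> 'x \<Rightarrow> rat \<Rightarrow> 'x" and A :: "'j \<Rightarrow> 'x \<Rightarrow> bool"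
  assumes fin: "finite J"
    and conv: "\<And>p q t. p \<in> K \<Longrightarrow> q \<in> K \<Longrightarrow> 0 \<le> t \<Longrightarrow> t \<le> 1 \<Longrightarrow> L p q t \<in> K"
    and L0: "\<And>p q. p \<in> K \<Longrightarrow> q \<in> K \<Longrightarrow> L p q 0 = p"
    and L1: "\<And>p q. p \<in> K \<Longrightarrow> q \<in> K \<Longrightarrow> L p q 1 = q"
    and lc: "\<And>j p q t1 t2 t. p \<in> K \<Longrightarrow> q \<in> K \<Longrightarrow> t1 \<noteq> t2 \<Longrightarrow>
       A j (L p q t1) \<Longrightarrow> A j (L p q t2) \<Longrightarrow> A j (L p q t)"
  shows "K \<noteq> {} \<Longrightarrow> (\<forall>x\<in>K. \<exists>j\<in>J. A j x) \<Longrightarrow> \<exists>j\<in>J. \<forall>x\<in>K. A j x"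
  using fin
proof (induction J rule: finite_induct)
  case empty then show ?case by auto
next
  case (insert k J)
  show ?case
  proof (cases "\<forall>x\<in>K. A k x")
    case True then show ?thesis by auto
  next
    case False
    then obtain p where p: "p \<in> K" "\<not> A k p" by auto
    have "\<forall>q\<in>K. \<exists>j\<in>J. A j q"
    proof
      fix q assume q: "q \<in> K"
      have "\<forall>t\<in>{0..1::rat}. \<exists>j\<in>insert k J. A j (L p q t)"
        using insert.prems(2) conv[OF p(1) q] by auto
      then obtain g where g: "\<And>t. t \<in> {0..1::rat} \<Longrightarrow> g t \<in> insert k J \<and> A (g t) (L p q t)"
        by metis
      have "\<not> inj_on g {0..1::rat}"
      proof
        assume inj: "inj_on g {0..1::rat}"
        have "g ` {0..1} \<subseteq> insert k J" using g by blast
        hence "finite (g ` {0..1::rat})" using insert.hyps(1) finite_subset by blast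
        with inj have "finite {0..1::rat}" using finite_imageD by blast
        moreover have "infinite {0..1::rat}" by (rule infinite_Icc) simp
        ultimately show False by simp
      qed
      then obtain t1 t2 where t: "t1 \<in> {0..1}" "t2 \<in> {0..1}" "t1 \<noteq> t2" "g t1 = g t2"
        unfolding inj_on_def by blast
      have jin: "g t1 \<in> insert k J" using g t by auto
      have A1: "A (g t1) (L p q t1)" using g t(1) by blast
      have A2: "A (g t1) (L p q t2)" using g[OF t(2)] t(4) by simp
      have all: "\<And>t. A (g t1) (L p q t)" using lc[OF p(1) q t(3) A1 A2] .
      from all[of 0] have "A (g t1) p" using L0[OF p(1) q] by simp
      with p(2) jin have "g t1 \<in> J" by auto
      moreover from all[of 1] have "A (g t1) q" using L1[OF p(1) q] by simp
      ultimately show "\<exists>j\<in>J. A j q" by blast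
    qed
    from insert.IH[OF insert.prems(1) this] show ?thesis by blast
  qed
qed

lemma rat_affine_zero:
  fixes a b t1 t2 :: rat
  assumes "(1-t1)*a + t1*b = 0" "(1-t2)*a + t2*b = 0" "t1 \<noteq> t2"
  shows "a = 0 \<and> b = 0"
proof -
  have "(t1 - t2) * (b - a) = 0" using assms(1,2) by (simp add: algebra_simps)
  hence "b = a" using assms(3) by simp
  thus ?thesis using assms(1) by (simp add: algebra_simps)
qed

lemma mat_of_rows_mult_index:
  assumes "i < length rs" "set rs \<subseteq> carrier_vec n"
  shows "(mat_of_rows n rs *\<^sub>v v) $ i = (rs ! i) \<bullet> v"
proof -
  have "rs ! i \<in> carrier_vec n" using assms by auto
  thus ?thesis using assms(1) by (subst index_mult_mat_vec) (auto simp: mat_of_rows_row)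
qed


definition comb :: "rat \<Rightarrow> rat vec \<Rightarrow> rat vec \<Rightarrow> rat vec" where
  "comb t a b = vec (dim_vec a) (\<lambda>i. (1-t) * a $ i + t * b $ i)"

lemma comb_dim[simp]: "dim_vec (comb t a b) = dim_vec a"
  by (simp add: comb_def)

lemma comb_carrier: "a \<in> carrier_vec n \<Longrightarrow> comb t a b \<in> carrier_vec n"
  by (rule carrier_vecI) (simp only: comb_dim carrier_vecD)

lemma comb_0: "comb 0 a b = a"
  by (rule eq_vecI) (auto simp: comb_def)

lemma comb_1: "dim_vec b = dim_vec a \<Longrightarrow> comb 1 a b = b"
  by (rule eq_vecI) (auto simp: comb_def)

lemma comb_append:
  assumes "dim_vec a1 = dim_vec a2" "dim_vec b1 = dim_vec b2"
  shows "comb t (a1 @\<^sub>v b1) (a2 @\<^sub>v b2) = comb t a1 a2 @\<^sub>v comb t b1 b2"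
  by (rule eq_vecI) (use assms in \<open>auto simp: comb_def\<close>)

lemma comb_scalar:
  assumes "dim_vec c = dim_vec w1" "dim_vec w2 = dim_vec w1"
  shows "c \<bullet> comb t w1 w2 = (1-t) * (c \<bullet> w1) + t * (c \<bullet> w2)"
proof -
  have "c \<bullet> comb t w1 w2 = (\<Sum>i\<in>{0..<dim_vec w1}. (1-t) * (c $ i * w1 $ i) + t * (c $ i * w2 $ i))"
    using assms unfolding comb_def scalar_prod_def by (intro sum.cong) (auto simp: algebra_simps)
  also have "\<dots> = (1-t) * (c \<bullet> w1) + t * (c \<bullet> w2)"
    using assms unfolding scalar_prod_def by (simp add: sum.distrib sum_distrib_left)
  finally show ?thesis .
qed

lemma comb_mult:
  assumes "S \<in> carrier_mat m n" "w1 \<in> carrier_vec n" "w2 \<in> carrier_vec n" "i < m"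
  shows "(S *\<^sub>v comb t w1 w2) $ i = (1-t) * (S *\<^sub>v w1) $ i + t * (S *\<^sub>v w2) $ i"
  using assms by (simp add: comb_scalar)

lemma conv_lt:
  fixes x1 x2 k t :: rat
  assumes "x1 < k" "x2 < k" "0 \<le> t" "t \<le> 1"
  shows "(1-t)*x1 + t*x2 < k"
proof -
  have e: "(1-t)*x1 + t*x2 = x1 + t*(x2-x1)" by (simp add: algebra_simps)
  show ?thesis
  proof (cases "x1 \<le> x2")
    case True
    have "t*(x2-x1) \<le> 1*(x2-x1)" using True assms(4) by (intro mult_right_mono) auto
    thus ?thesis using e assms(2) by simp
  next
    case False
    have "t*(x2-x1) \<le> 0" using False assms(3) by (simp add: mult_nonneg_nonpos)
    thus ?thesis using e assms(1) by simp
  qed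
qed

lemma convex_rel:
  assumes wf: "ctf_wf C" and lra: "ctf_is_LRA C"
    and r1: "ctf_rel C u1 v1" and r2: "ctf_rel C u2 v2" and t: "0 \<le> t" "t \<le> 1"
  shows "ctf_rel C (comb t u1 u2) (comb t v1 v2)"
proof -
  obtain y1 z1 where w1: "y1 \<in> carrier_vec (ctf_p C)" "z1 \<in> carrier_vec (ctf_q C)"
    "\<forall>\<phi>\<in>set (ctf_atoms C). atom_holds \<phi> (u1 @\<^sub>v v1 @\<^sub>v y1 @\<^sub>v z1)"
    using r1 unfolding ctf_rel_def by blast
  obtain y2 z2 where w2: "y2 \<in> carrier_vec (ctf_p C)" "z2 \<in> carrier_vec (ctf_q C)"
    "\<forall>\<phi>\<in>set (ctf_atoms C). atom_holds \<phi> (u2 @\<^sub>v v2 @\<^sub>v y2 @\<^sub>v z2)"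
    using r2 unfolding ctf_rel_def by blast
  have d: "u1 \<in> carrier_vec (ctf_dim C)" "v1 \<in> carrier_vec (ctf_dim C)"
    "u2 \<in> carrier_vec (ctf_dim C)" "v2 \<in> carrier_vec (ctf_dim C)"
    using r1 r2 unfolding ctf_rel_def by auto
  have q0: "ctf_q C = 0" using lra unfolding ctf_is_LRA_def .
  have dz: "dim_vec z1 = 0" "dim_vec z2 = 0" using w1(2) w2(2) q0 by auto
  have zc: "comb t z1 z2 = z1" using dz by (intro eq_vecI) auto
  have dims: "dim_vec u1 = dim_vec u2" "dim_vec v1 = dim_vec v2" "dim_vec y1 = dim_vec y2"
    "dim_vec z1 = dim_vec z2"
    using d w1(1) w2(1) dz by auto
  define W1 where "W1 = u1 @\<^sub>v v1 @\<^sub>v y1 @\<^sub>v z1"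
  define W2 where "W2 = u2 @\<^sub>v v2 @\<^sub>v y2 @\<^sub>v z2"
  define w where "w = comb t u1 u2 @\<^sub>v comb t v1 v2 @\<^sub>v comb t y1 y2 @\<^sub>v z1"
  have weq: "w = comb t W1 W2"
  proof -
    have "comb t W1 W2 = comb t u1 u2 @\<^sub>v comb t (v1 @\<^sub>v y1 @\<^sub>v z1) (v2 @\<^sub>v y2 @\<^sub>v z2)"
      unfolding W1_def W2_def by (rule comb_append) (use dims in simp_all)
    also have "comb t (v1 @\<^sub>v y1 @\<^sub>v z1) (v2 @\<^sub>v y2 @\<^sub>v z2) = comb t v1 v2 @\<^sub>v comb t (y1 @\<^sub>v z1) (y2 @\<^sub>v z2)"
      by (rule comb_append) (use dims in simp_all)
    also have "comb t (y1 @\<^sub>v z1) (y2 @\<^sub>v z2) = comb t y1 y2 @\<^sub>v comb t z1 z2"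
      by (rule comb_append) (use dims in simp_all)
    finally show ?thesis unfolding w_def zc by simp
  qed
  have dW: "dim_vec W1 = 2 * ctf_dim C + ctf_p C + ctf_q C" "dim_vec W2 = dim_vec W1"
    unfolding W1_def W2_def using d w1(1,2) w2(1,2) by auto
  have atoms: "\<forall>\<phi>\<in>set (ctf_atoms C). atom_holds \<phi> w"
  proof
    fix \<phi> assume ph: "\<phi> \<in> set (ctf_atoms C)"
    have cd: "dim_vec (atom_coeffs \<phi>) = dim_vec W1"
      using wf ph dW unfolding ctf_wf_def by auto
    have h1: "atom_holds \<phi> W1" using w1(3) ph unfolding W1_def by blast
    have h2: "atom_holds \<phi> W2" using w2(3) ph unfolding W2_def by blast
    show "atom_holds \<phi> w"
    proof (cases \<phi>)
      case (Lt c k)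
      have e: "c \<bullet> w = (1-t) * (c \<bullet> W1) + t * (c \<bullet> W2)"
        unfolding weq by (rule comb_scalar) (use cd Lt dW in simp_all)
      have "c \<bullet> W1 < k" "c \<bullet> W2 < k" using h1 h2 Lt by auto
      hence "c \<bullet> w < k" unfolding e using conv_lt t by blast
      thus ?thesis using Lt by simp
    next
      case (Eq c k)
      have e: "c \<bullet> w = (1-t) * (c \<bullet> W1) + t * (c \<bullet> W2)"
        unfolding weq by (rule comb_scalar) (use cd Eq dW in simp_all)
      have "c \<bullet> W1 = k" "c \<bullet> W2 = k" using h1 h2 Eq by auto
      hence "c \<bullet> w = k" unfolding e by (simp add: algebra_simps)
      thus ?thesis using Eq by simp
    qed
  qed
  have yc: "comb t y1 y2 \<in> carrier_vec (ctf_p C)" using w1(1) by (rule comb_carrier)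
  have uc: "comb t u1 u2 \<in> carrier_vec (ctf_dim C)" using d(1) by (rule comb_carrier)
  have vc: "comb t v1 v2 \<in> carrier_vec (ctf_dim C)" using d(2) by (rule comb_carrier)
  have zi: "\<forall>i<ctf_q C. z1 $ i \<in> \<int>" using q0 by simp
  show ?thesis unfolding ctf_rel_def
    using uc vc yc w1(2) zi atoms unfolding w_def by blast
qed


lemma part1:
  assumes ah: "alpha_hat C d S V"
  shows "qvasr_abstraction (ctf_dim C) (ctf_rel C) d S V"
proof -
  let ?n = "ctf_dim C"
  obtain bR bI where bR: "is_basis_of ?n (Res C) bR" and bI: "is_basis_of ?n (Inc C) bI"
    and dd: "d = length bR + length bI"
    and SS: "S = mat_of_rows ?n (map fst (bR @ bI))"
    and VV: "V = {(vec d (\<lambda>i. if i < length bR then 0 else 1), vec_of_list (map snd (bR @ bI)))}"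
    using ah unfolding alpha_hat_def by blast
  let ?m = "length bR"
  let ?r = "vec d (\<lambda>i. if i < ?m then 0 else 1) :: rat vec"
  let ?a = "vec_of_list (map snd (bR @ bI)) :: rat vec"
  have sR: "set bR \<subseteq> Res C" and sI: "set bI \<subseteq> Inc C"
    using bR bI unfolding is_basis_of_def by auto
  have rows: "set (map fst (bR @ bI)) \<subseteq> carrier_vec ?n"
    using sR sI unfolding Res_def Inc_def by auto
  have Sc: "S \<in> carrier_mat d ?n" unfolding SS dd using mat_of_rows_carrier(1)[of ?n "map fst (bR @ bI)"] by simp
  have ac: "vec_of_list (map snd (bR @ bI)) \<in> carrier_vec d" by (rule carrier_vecI) (simp add: dd)
  have qv: "is_qvasr d V" unfolding VV is_qvasr_def using ac by auto
  have ls: "lin_sim d ?n S (ctf_rel C) (vasr_step d V)"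
    unfolding lin_sim_def
  proof (intro conjI Sc allI impI)
    fix u v assume rel: "ctf_rel C u v"
    have "S *\<^sub>v v = vec d (\<lambda>i. ?r $ i * (S *\<^sub>v u) $ i) + ?a"
    proof (rule eq_vecI)
      show "dim_vec (S *\<^sub>v v) = dim_vec (vec d (\<lambda>i. ?r $ i * (S *\<^sub>v u) $ i) + ?a)"
        using Sc dd by simp
      fix i assume "i < dim_vec (vec d (\<lambda>i. ?r $ i * (S *\<^sub>v u) $ i) + ?a)"
      hence i: "i < d" using dd by simp
      have nth: "map fst (bR @ bI) ! i = fst ((bR @ bI) ! i)" using i dd by (intro nth_map) simp
      have il: "i < length (map fst (bR @ bI))" using i dd by simp
      have Sv: "(S *\<^sub>v v) $ i = fst ((bR @ bI) ! i) \<bullet> v"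
        unfolding SS nth[symmetric] by (rule mat_of_rows_mult_index[OF il rows])
      have Su: "(S *\<^sub>v u) $ i = fst ((bR @ bI) ! i) \<bullet> u"
        unfolding SS nth[symmetric] by (rule mat_of_rows_mult_index[OF il rows])
      have ai: "?a $ i = snd ((bR @ bI) ! i)"
        unfolding vec_of_list_index using i dd by (intro nth_map) simp
      show "(S *\<^sub>v v) $ i = (vec d (\<lambda>i. ?r $ i * (S *\<^sub>v u) $ i) + ?a) $ i"
      proof (cases "i < ?m")
        case True
        hence "(bR @ bI) ! i \<in> Res C" using sR by (auto simp: nth_append)
        hence "fst ((bR @ bI) ! i) \<bullet> v = snd ((bR @ bI) ! i)"
          using rel unfolding Res_def by auto
        thus ?thesis using True i dd Sv ai by simp
      next
        case False
        hence "(bR @ bI) ! i \<in> Inc C" using sI i dd by (auto simp: nth_append)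
        hence "fst ((bR @ bI) ! i) \<bullet> v = fst ((bR @ bI) ! i) \<bullet> u + snd ((bR @ bI) ! i)"
          using rel unfolding Inc_def by auto
        thus ?thesis using False i dd Sv Su ai by simp
      qed
    qed
    moreover have "S *\<^sub>v u \<in> carrier_vec d" by (rule carrier_vecI) (use Sc in simp)
    ultimately show "vasr_step d V (S *\<^sub>v u) (S *\<^sub>v v)"
      unfolding vasr_step_def VV by auto
  qed
  show ?thesis unfolding qvasr_abstraction_def using Sc qv ls by auto
qed


lemma select_transition:
  assumes wf: "ctf_wf C" and cons: "ctf_consistent C" and lra: "ctf_is_LRA C"
    and ab: "qvasr_abstraction (ctf_dim C) (ctf_rel C) d' S' V'"
  shows "\<exists>(r', a')\<in>V'. \<forall>u v. ctf_rel C u v \<longrightarrow>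
           (\<forall>i<d'. (S' *\<^sub>v v) $ i = r' $ i * (S' *\<^sub>v u) $ i + a' $ i)"
proof -
  let ?n = "ctf_dim C"
  have S'c: "S' \<in> carrier_mat d' ?n" and qv: "is_qvasr d' V'"
    and ls: "lin_sim d' ?n S' (ctf_rel C) (vasr_step d' V')"
    using ab unfolding qvasr_abstraction_def by auto
  define K where "K = {x. ctf_rel C (fst x) (snd x)}"
  define L where "L = (\<lambda>p q t. (comb t (fst p) (fst q), comb t (snd p) (snd q)))"
  define A where "A = (\<lambda>(j :: rat vec \<times> rat vec) (x :: rat vec \<times> rat vec).
     \<forall>i<d'. (S' *\<^sub>v snd x) $ i = fst j $ i * (S' *\<^sub>v fst x) $ i + snd j $ i)"
  have Kd: "fst x \<in> carrier_vec ?n \<and> snd x \<in> carrier_vec ?n" if "x \<in> K" for x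
    using that unfolding K_def ctf_rel_def by auto
  have fin: "finite V'" using qv unfolding is_qvasr_def by auto
  have conv: "L p q t \<in> K" if "p \<in> K" "q \<in> K" "0 \<le> t" "t \<le> 1" for p q t
    using that convex_rel[OF wf lra] unfolding K_def L_def by auto
  have L0: "L p q 0 = p" if "p \<in> K" "q \<in> K" for p q unfolding L_def by (simp add: comb_0)
  have L1: "L p q 1 = q" if "p \<in> K" "q \<in> K" for p q
  proof -
    have "dim_vec (fst q) = dim_vec (fst p)" "dim_vec (snd q) = dim_vec (snd p)"
      using Kd[OF that(1)] Kd[OF that(2)] carrier_vecD by metis+
    thus ?thesis unfolding L_def by (simp add: comb_1)
  qed
  have lc: "A j (L p q t)" if pq: "p \<in> K" "q \<in> K" and tt: "t1 \<noteq> t2"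
    and A1: "A j (L p q t1)" and A2: "A j (L p q t2)" for j p q t1 t2 t
  proof -
    have aff: "(S' *\<^sub>v snd (L p q s)) $ i - fst j $ i * (S' *\<^sub>v fst (L p q s)) $ i - snd j $ i
       = (1-s) * ((S' *\<^sub>v snd p) $ i - fst j $ i * (S' *\<^sub>v fst p) $ i - snd j $ i)
         + s * ((S' *\<^sub>v snd q) $ i - fst j $ i * (S' *\<^sub>v fst q) $ i - snd j $ i)"
      if i: "i < d'" for s i
    proof -
      have m1: "(S' *\<^sub>v comb s (fst p) (fst q)) $ i = (1-s) * (S' *\<^sub>v fst p) $ i + s * (S' *\<^sub>v fst q) $ i"
        by (rule comb_mult[OF S'c _ _ i]) (use Kd[OF pq(1)] Kd[OF pq(2)] in auto)
      have m2: "(S' *\<^sub>v comb s (snd p) (snd q)) $ i = (1-s) * (S' *\<^sub>v snd p) $ i + s * (S' *\<^sub>v snd q) $ i"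
        by (rule comb_mult[OF S'c _ _ i]) (use Kd[OF pq(1)] Kd[OF pq(2)] in auto)
      show ?thesis unfolding L_def fst_conv snd_conv m1 m2 by (simp add: algebra_simps)
    qed
    show ?thesis unfolding A_def
    proof (intro allI impI)
      fix i assume i: "i < d'"
      have "(1-t1) * ((S' *\<^sub>v snd p) $ i - fst j $ i * (S' *\<^sub>v fst p) $ i - snd j $ i)
         + t1 * ((S' *\<^sub>v snd q) $ i - fst j $ i * (S' *\<^sub>v fst q) $ i - snd j $ i) = 0"
        using aff[OF i, of t1] A1 i unfolding A_def by simp
      moreover have "(1-t2) * ((S' *\<^sub>v snd p) $ i - fst j $ i * (S' *\<^sub>v fst p) $ i - snd j $ i)
         + t2 * ((S' *\<^sub>v snd q) $ i - fst j $ i * (S' *\<^sub>v fst q) $ i - snd j $ i) = 0"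
        using aff[OF i, of t2] A2 i unfolding A_def by simp
      ultimately have z: "(S' *\<^sub>v snd p) $ i - fst j $ i * (S' *\<^sub>v fst p) $ i - snd j $ i = 0"
        "(S' *\<^sub>v snd q) $ i - fst j $ i * (S' *\<^sub>v fst q) $ i - snd j $ i = 0"
        using rat_affine_zero tt by blast+
      show "(S' *\<^sub>v snd (L p q t)) $ i = fst j $ i * (S' *\<^sub>v fst (L p q t)) $ i + snd j $ i"
        using aff[OF i, of t] z by simp
    qed
  qed
  have Kne: "K \<noteq> {}" using cons unfolding ctf_consistent_def K_def by auto
  have cov: "\<forall>x\<in>K. \<exists>j\<in>V'. A j x"
  proof
    fix x assume x: "x \<in> K"
    hence "vasr_step d' V' (S' *\<^sub>v fst x) (S' *\<^sub>v snd x)"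
      using ls unfolding lin_sim_def K_def by auto
    then obtain r a where ra: "(r, a) \<in> V'"
      and eq: "S' *\<^sub>v snd x = vec d' (\<lambda>i. r $ i * (S' *\<^sub>v fst x) $ i) + a"
      unfolding vasr_step_def by auto
    have "a \<in> carrier_vec d'" using qv ra unfolding is_qvasr_def by auto
    hence "A (r, a) x" unfolding A_def using eq by auto
    thus "\<exists>j\<in>V'. A j x" using ra by blast
  qed
  obtain j where j: "j \<in> V'" "\<forall>x\<in>K. A j x"
  proof -
    have "\<exists>j\<in>V'. \<forall>x\<in>K. A j x"
      apply (rule convex_union_single[where J=V' and K=K and L=L and A=A])
            apply (rule fin)
           apply (erule (3) conv)
          apply (erule (1) L0)
         apply (erule (1) L1)
        apply (rule lc; assumption)
       apply (rule Kne)
      apply (rule cov)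
      done
    thus ?thesis using that by blast
  qed
  show ?thesis
    using j unfolding A_def K_def by (cases j) auto
qed


lemma part2:
  assumes wf: "ctf_wf C" and cons: "ctf_consistent C" and lra: "ctf_is_LRA C"
    and ah: "alpha_hat C d S V"
    and ab: "qvasr_abstraction (ctf_dim C) (ctf_rel C) d' S' V'"
  shows "abs_le d S V d' S' V'"
proof -
  let ?n = "ctf_dim C"
  obtain bR bI where bR: "is_basis_of ?n (Res C) bR" and bI: "is_basis_of ?n (Inc C) bI"
    and dd: "d = length bR + length bI"
    and SS: "S = mat_of_rows ?n (map fst (bR @ bI))"
    and VV: "V = {(vec d (\<lambda>i. if i < length bR then 0 else 1), vec_of_list (map snd (bR @ bI)))}"
    using ah unfolding alpha_hat_def by blast
  define m where "m = length bR"
  define l where "l = length bI"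
  have dml: "d = m + l" using dd m_def l_def by simp
  have sR: "set bR \<subseteq> Res C" and sI: "set bI \<subseteq> Inc C"
    using bR bI unfolding is_basis_of_def by auto
  have rows: "set (map fst (bR @ bI)) \<subseteq> carrier_vec ?n"
    using sR sI unfolding Res_def Inc_def by auto
  have Sc: "S \<in> carrier_mat d ?n" unfolding SS dd using mat_of_rows_carrier(1)[of ?n "map fst (bR @ bI)"] by simp
  have S'c: "S' \<in> carrier_mat d' ?n" and qv: "is_qvasr d' V'"
    using ab unfolding qvasr_abstraction_def by auto
  obtain r' a' where ra: "(r', a') \<in> V'" and tr: "\<And>u v i. ctf_rel C u v \<Longrightarrow> i < d' \<Longrightarrow>
           (S' *\<^sub>v v) $ i = r' $ i * (S' *\<^sub>v u) $ i + a' $ i"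
    using select_transition[OF wf cons lra ab] by blast
  have r'c: "r' \<in> carrier_vec d'" and a'c: "a' \<in> carrier_vec d'"
    and r01: "\<And>i. i < d' \<Longrightarrow> r' $ i = 0 \<or> r' $ i = 1"
    using qv ra unfolding is_qvasr_def by auto
  have rowS': "row S' i \<bullet> w = (S' *\<^sub>v w) $ i" if "i < d'" for i w
    using S'c that by simp
  have inRes: "(row S' i, a' $ i) \<in> Res C" if "i < d'" "r' $ i = 0" for i
  proof -
    have "row S' i \<bullet> v = a' $ i" if "ctf_rel C u v" for u v
      using rowS'[OF \<open>i < d'\<close>] tr[OF that \<open>i < d'\<close>] \<open>r' $ i = 0\<close> by simp
    moreover have "row S' i \<in> carrier_vec ?n" using S'c \<open>i < d'\<close> by simp
    ultimately show ?thesis unfolding Res_def by blast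
  qed
  have inInc: "(row S' i, a' $ i) \<in> Inc C" if "i < d'" "r' $ i = 1" for i
  proof -
    have "row S' i \<bullet> v = row S' i \<bullet> u + a' $ i" if "ctf_rel C u v" for u v
      using rowS'[OF \<open>i < d'\<close>, of u] rowS'[OF \<open>i < d'\<close>, of v] tr[OF that \<open>i < d'\<close>] \<open>r' $ i = 1\<close> by simp
    moreover have "row S' i \<in> carrier_vec ?n" using S'c \<open>i < d'\<close> by simp
    ultimately show ?thesis unfolding Inc_def by blast
  qed
  define PR where "PR = (\<lambda>(s::rat vec) (a::rat) (c::nat \<Rightarrow> rat).
     (\<forall>j<?n. s $ j = (\<Sum>k<m. c k * fst (bR ! k) $ j)) \<and> a = (\<Sum>k<m. c k * snd (bR ! k)))"
  define PI where "PI = (\<lambda>(s::rat vec) (a::rat) (c::nat \<Rightarrow> rat).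
     (\<forall>j<?n. s $ j = (\<Sum>k<l. c k * fst (bI ! k) $ j)) \<and> a = (\<Sum>k<l. c k * snd (bI ! k)))"
  have repR: "\<exists>c. PR s a c" if "(s, a) \<in> Res C" for s a
  proof -
    have "\<forall>(s, a)\<in>Res C. \<exists>c::nat \<Rightarrow> rat.
        (\<forall>j<?n. s $ j = (\<Sum>i<length bR. c i * fst (bR ! i) $ j)) \<and>
        a = (\<Sum>i<length bR. c i * snd (bR ! i))"
      using bR unfolding is_basis_of_def by (elim conjE)
    from bspec[OF this that] show ?thesis unfolding PR_def m_def by simp
  qed
  have repI: "\<exists>c. PI s a c" if "(s, a) \<in> Inc C" for s a
  proof -
    have "\<forall>(s, a)\<in>Inc C. \<exists>c::nat \<Rightarrow> rat.
        (\<forall>j<?n. s $ j = (\<Sum>i<length bI. c i * fst (bI ! i) $ j)) \<and>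
        a = (\<Sum>i<length bI. c i * snd (bI ! i))"
      using bI unfolding is_basis_of_def by (elim conjE)
    from bspec[OF this that] show ?thesis unfolding PI_def l_def by simp
  qed
  define cf where "cf = (\<lambda>i. if r' $ i = 0 then (SOME c. PR (row S' i) (a' $ i) c)
                                        else (SOME c. PI (row S' i) (a' $ i) c))"
  have cfR: "PR (row S' i) (a' $ i) (cf i)" if "i < d'" "r' $ i = 0" for i
  proof -
    have "\<exists>c. PR (row S' i) (a' $ i) c" by (rule repR[OF inRes[OF that]])
    hence "PR (row S' i) (a' $ i) (SOME c. PR (row S' i) (a' $ i) c)" by (rule someI_ex)
    thus ?thesis unfolding cf_def using that(2) by simp
  qed
  have cfI: "PI (row S' i) (a' $ i) (cf i)" if "i < d'" "r' $ i = 1" for i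
  proof -
    have "\<exists>c. PI (row S' i) (a' $ i) c" by (rule repI[OF inInc[OF that]])
    hence "PI (row S' i) (a' $ i) (SOME c. PI (row S' i) (a' $ i) c)" by (rule someI_ex)
    thus ?thesis unfolding cf_def using that(2) by simp
  qed
  define T where "T = mat d' d (\<lambda>(i,k). if r' $ i = 0 then (if k < m then cf i k else 0)
                                  else (if k < m then 0 else cf i (k - m)))"
  have Tc: "T \<in> carrier_mat d' d" unfolding T_def by simp
  have Tv: "(T *\<^sub>v w) $ i = (if r' $ i = 0 then (\<Sum>k<m. cf i k * w $ k)
                             else (\<Sum>k<l. cf i k * w $ (m + k)))"
    if i: "i < d'" and w: "w \<in> carrier_vec d" for i w
  proof -
    have dw: "dim_vec w = m + l" using w dml by simp
    have "(T *\<^sub>v w) $ i = row T i \<bullet> w" using i Tc by simp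
    also have "\<dots> = (\<Sum>k\<in>{0..<m+l}. row T i $ k * w $ k)" unfolding scalar_prod_def dw ..
    also have "\<dots> = (\<Sum>k<m+l. T $$ (i,k) * w $ k)" unfolding atLeast0LessThan
      using i Tc dml by (intro sum.cong) auto
    also have "\<dots> = (\<Sum>k<m. T $$ (i,k) * w $ k) + (\<Sum>k<l. T $$ (i,m+k) * w $ (m+k))"
      by (rule sum_split_nat)
    also have "(\<Sum>k<m. T $$ (i,k) * w $ k) = (\<Sum>k<m. (if r' $ i = 0 then cf i k else 0) * w $ k)"
      using i dml by (intro sum.cong) (auto simp: T_def)
    also have "(\<Sum>k<l. T $$ (i,m+k) * w $ (m+k)) = (\<Sum>k<l. (if r' $ i = 0 then 0 else cf i k) * w $ (m+k))"
      using i dml by (intro sum.cong) (auto simp: T_def)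
    finally show ?thesis by auto
  qed
  have TS: "T * S = S'"
  proof (rule eq_matI)
    show "dim_row (T * S) = dim_row S'" "dim_col (T * S) = dim_col S'" using Tc Sc S'c by auto
    fix i j assume i: "i < dim_row S'" and j: "j < dim_col S'"
    hence i': "i < d'" and j': "j < ?n" using S'c by auto
    have colS: "col S j \<in> carrier_vec d" by (rule carrier_vecI) (use Sc in simp)
    have colk: "col S j $ k = fst ((bR @ bI) ! k) $ j" if "k < d" for k
    proof -
      have "map fst (bR @ bI) ! k = fst ((bR @ bI) ! k)" using that dd by (intro nth_map) simp
      moreover have "col S j $ k = S $$ (k, j)" using that j' Sc by simp
      ultimately show ?thesis using that j' dd unfolding SS
        by (simp only: mat_of_rows_index length_map length_append)
    qed
    have "(T * S) $$ (i,j) = (T *\<^sub>v col S j) $ i" using i' j' Tc Sc by simp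
    also have "\<dots> = S' $$ (i,j)"
    proof (cases "r' $ i = 0")
      case True
      have "(T *\<^sub>v col S j) $ i = (\<Sum>k<m. cf i k * fst (bR ! k) $ j)"
        using Tv[OF i' colS] True colk dml by (simp add: nth_append m_def)
      also have "\<dots> = row S' i $ j" using cfR[OF i' True] j' unfolding PR_def by simp
      finally show ?thesis using i' j' S'c by simp
    next
      case False
      hence r1: "r' $ i = 1" using r01[OF i'] by auto
      have "(T *\<^sub>v col S j) $ i = (\<Sum>k<l. cf i k * fst (bI ! k) $ j)"
        using Tv[OF i' colS] False colk dml by (simp add: nth_append m_def)
      also have "\<dots> = row S' i $ j" using cfI[OF i' r1] j' unfolding PI_def by simp
      finally show ?thesis using i' j' S'c by simp
    qed
    finally show "(T * S) $$ (i,j) = S' $$ (i,j)" .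
  qed
  have LS: "lin_sim d' d T (vasr_step d V) (vasr_step d' V')"
    unfolding lin_sim_def
  proof (intro conjI Tc allI impI)
    fix u v assume st: "vasr_step d V u v"
    hence uc: "u \<in> carrier_vec d" and veq0: "v = vec d (\<lambda>i. vec d (\<lambda>i. if i < m then 0 else 1) $ i * u $ i)
        + vec_of_list (map snd (bR @ bI))"
      unfolding vasr_step_def VV m_def by auto
    have "vec d (\<lambda>i. vec d (\<lambda>i. if i < m then (0::rat) else 1) $ i * u $ i)
        = vec d (\<lambda>i. (if i < m then 0 else 1) * u $ i)" by (rule eq_vecI) auto
    hence veq: "v = vec d (\<lambda>i. (if i < m then 0 else 1) * u $ i)
        + vec_of_list (map snd (bR @ bI))" using veq0 by simp
    have vc: "v \<in> carrier_vec d" unfolding veq by (rule carrier_vecI) (simp add: dd)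
    have vk: "v $ k = (if k < m then 0 else u $ k) + snd ((bR @ bI) ! k)" if "k < d" for k
    proof -
      have "map snd (bR @ bI) ! k = snd ((bR @ bI) ! k)" using that dd by (intro nth_map) simp
      thus ?thesis using that veq dd by (simp add: vec_of_list_index)
    qed
    have "T *\<^sub>v v = vec d' (\<lambda>i. r' $ i * (T *\<^sub>v u) $ i) + a'"
    proof (rule eq_vecI)
      show "dim_vec (T *\<^sub>v v) = dim_vec (vec d' (\<lambda>i. r' $ i * (T *\<^sub>v u) $ i) + a')"
        using Tc a'c by simp
      fix i assume "i < dim_vec (vec d' (\<lambda>i. r' $ i * (T *\<^sub>v u) $ i) + a')"
      hence i: "i < d'" using a'c by simp
      show "(T *\<^sub>v v) $ i = (vec d' (\<lambda>i. r' $ i * (T *\<^sub>v u) $ i) + a') $ i"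
      proof (cases "r' $ i = 0")
        case True
        have "(T *\<^sub>v v) $ i = (\<Sum>k<m. cf i k * snd (bR ! k))"
          using Tv[OF i vc] True vk dml by (simp add: nth_append m_def)
        also have "\<dots> = a' $ i" using cfR[OF i True] unfolding PR_def by simp
        finally show ?thesis using i a'c True by simp
      next
        case False
        hence r1: "r' $ i = 1" using r01[OF i] by auto
        have "(T *\<^sub>v v) $ i = (\<Sum>k<l. cf i k * (u $ (m + k) + snd (bI ! k)))"
          using Tv[OF i vc] False vk dml by (simp add: nth_append m_def)
        also have "\<dots> = (\<Sum>k<l. cf i k * u $ (m + k)) + (\<Sum>k<l. cf i k * snd (bI ! k))"
          by (simp add: distrib_left sum.distrib)
        also have "\<dots> = (T *\<^sub>v u) $ i + a' $ i" using Tv[OF i uc] False cfI[OF i r1] unfolding PI_def by simp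
        finally show ?thesis using i a'c r1 by simp
      qed
    qed
    moreover have "T *\<^sub>v u \<in> carrier_vec d'" by (rule carrier_vecI) (use Tc in simp)
    ultimately show "vasr_step d' V' (T *\<^sub>v u) (T *\<^sub>v v)"
      unfolding vasr_step_def using ra by auto
  qed
  show ?thesis unfolding abs_le_def using LS TS by blast
qed

theorem proposition1:
  assumes "ctf_wf C" and "ctf_consistent C"
  shows "(\<forall>d S V. alpha_hat C d S V \<longrightarrow>
            qvasr_abstraction (ctf_dim C) (ctf_rel C) d S V) \<and>
         (ctf_is_LRA C \<longrightarrow> (\<forall>d S V. alpha_hat C d S V \<longrightarrow>
            best_qvasr_abstraction (ctf_dim C) (ctf_rel C) d S V))"
proof (intro conjI allI impI)
  fix d S V assume "alpha_hat C d S V"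
  thus "qvasr_abstraction (ctf_dim C) (ctf_rel C) d S V" by (rule part1)
next
  fix d S V assume lra: "ctf_is_LRA C" and ah: "alpha_hat C d S V"
  show "best_qvasr_abstraction (ctf_dim C) (ctf_rel C) d S V"
    unfolding best_qvasr_abstraction_def
  proof (intro conjI allI impI)
    show "qvasr_abstraction (ctf_dim C) (ctf_rel C) d S V" using ah by (rule part1)
  next
    fix d' S' V' assume "qvasr_abstraction (ctf_dim C) (ctf_rel C) d' S' V'"
    thus "abs_le d S V d' S' V'" using part2[OF assms lra ah] by blast
  qed
qed

end
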